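(* Let $\Omega\subset\mathbb{R}^2$ be open, $\lambda>0$, and let $u\in L^2(\Omega)$ satisfy $-\Delta u=\lambda u$ in $\Omega$. Let $\mathbf{x}_0\in\Omega$, $h>0$, $\alpha\in(0,1)$, and let $\mathbf{e}^-,\mathbf{e}^+$ be unit vectors with angle $\alpha\pi$ from $\mathbf{e}^-$ to $\mathbf{e}^+$; put $\Gamma^\pm=\{\mathbf{x}_0+t\mathbf{e}^\pm:0\le t\le h\}\subset\Omega$. Suppose $\Gamma^+$ is a singular line of $u$ ($\partial_\nu u=0$ on $\Gamma^+$, $\nu$ a unit normal to $\Gamma^+$) and $\Gamma^-$ is a nodal line of $u$ ($u=0$ on $\Gamma^-$). Let $n\in\mathbb{N}$, $n\ge2$. If $\alpha\neq\frac{2q+1}{2p}$ for all integers $p,q$ with $1\le p\le n-1$ and $0\le q\le p-1$, then $u$ vanishes up to the order $n$ at $\mathbf{x}_0$, i.e. all partial derivatives of $u$ of order at most $n-1$ vanish at $\mathbf{x}_0$.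
   Context: No boundary condition is imposed on $\partial\Omega$; $u$ is real-analytic in $\Omega$. "Vanishes up to order $n$" means every homogeneous term of degree $<n$ in the Taylor expansion of $u$ at $\mathbf{x}_0$ vanishes. *)

theory Defs
  imports "HOL-Analysis.Analysis"
begin

text \<open>Functions on the plane are modelled as functions on real \<times> real.
  First-order partial derivatives: False = d/dx, True = d/dy.\<close>

definition partial :: "bool \<Rightarrow> (real \<times> real \<Rightarrow> real) \<Rightarrow> (real \<times> real \<Rightarrow> real)" where
  "partial d f = (\<lambda>(x, y).
     if d then deriv (\<lambda>t. f (x, t)) y else deriv (\<lambda>t. f (t, y)) x)"

definition iter_partial :: "bool list \<Rightarrow> (real \<times> real \<Rightarrow> real) \<Rightarrow> (real \<times> real \<Rightarrow> real)" where
  "iter_partial ds f = foldr partial ds f"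

definition smooth_on :: "(real \<times> real) set \<Rightarrow> (real \<times> real \<Rightarrow> real) \<Rightarrow> bool" where
  "smooth_on S f \<longleftrightarrow> (\<forall>ds. \<forall>p\<in>S. iter_partial ds f differentiable (at p))"

definition real_analytic_on :: "(real \<times> real) set \<Rightarrow> (real \<times> real \<Rightarrow> real) \<Rightarrow> bool" where
  "real_analytic_on S f \<longleftrightarrow> (\<forall>p\<in>S. \<exists>r>0. \<exists>c :: nat \<Rightarrow> nat \<Rightarrow> real.
     \<forall>z\<in>ball p r.
       (\<lambda>ij. norm (c (fst ij) (snd ij) * (fst z - fst p) ^ fst ij * (snd z - snd p) ^ snd ij))
         summable_on (UNIV :: (nat \<times> nat) set) \<and>
       f z = infsum (\<lambda>ij. c (fst ij) (snd ij) * (fst z - fst p) ^ fst ij * (snd z - snd p) ^ snd ij)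
               (UNIV :: (nat \<times> nat) set))"

definition laplacian :: "(real \<times> real \<Rightarrow> real) \<Rightarrow> (real \<times> real \<Rightarrow> real)" where
  "laplacian f = (\<lambda>p. partial False (partial False f) p + partial True (partial True f) p)"

definition dir :: "real \<Rightarrow> real \<times> real" where
  "dir \<theta> = (cos \<theta>, sin \<theta>)"

definition segment_from :: "real \<times> real \<Rightarrow> real \<times> real \<Rightarrow> real \<Rightarrow> (real \<times> real) set" where
  "segment_from x0 e h = {x0 + t *\<^sub>R e | t. 0 \<le> t \<and> t \<le> h}"

definition normal_deriv :: "(real \<times> real \<Rightarrow> real) \<Rightarrow> real \<times> real \<Rightarrow> real \<times> real \<Rightarrow> real" where
  "normal_deriv f \<nu> p = fst \<nu> * partial False f p + snd \<nu> * partial True f p"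

end

theory Submission
  imports Defs
begin

lemma lin_pair:
  fixes f' :: "real \<times> real \<Rightarrow> real"
  assumes lin: "linear f'"
  shows "f' v = fst v * f' (1,0) + snd v * f' (0,1)"
proof -
  have 1: "f' v = f' ((fst v, 0) + (0, snd v))" by (cases v) simp
  have 2: "f' ((fst v, 0) + (0, snd v)) = f' (fst v, 0) + f' (0, snd v)" by (rule linear_add[OF lin])
  have "f' (fst v *\<^sub>R (1,0)) = fst v *\<^sub>R f' (1,0)" by (rule linear_scale[OF lin])
  then have 3: "f' (fst v, 0) = fst v * f' (1,0)" by simp
  have "f' (snd v *\<^sub>R (0,1)) = snd v *\<^sub>R f' (0,1)" by (rule linear_scale[OF lin])
  then have 4: "f' (0, snd v) = snd v * f' (0,1)" by simp
  show ?thesis using 1 2 3 4 by simp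
qed

lemma partial_has:
  assumes "(f has_derivative f') (at p)"
  shows "partial False f p = f' (1,0)" "partial True f p = f' (0,1)"
proof -
  obtain a b where p: "p = (a,b)" by (cases p)
  have lin: "linear f'" using assms has_derivative_linear by blast
  have d1: "((\<lambda>t. (t,b)) has_derivative (\<lambda>s. (s,0))) (at a)"
    by (auto intro!: derivative_eq_intros)
  have "((\<lambda>t. f (t,b)) has_derivative (\<lambda>s. f' (s,0))) (at a)"
    using has_derivative_compose[OF d1, of f f'] assms p by (simp add: o_def)
  moreover have "(\<lambda>s. f' (s,0)) = (\<lambda>s. f' (1,0) * s)"
  proof
    fix s show "f' (s,0) = f' (1,0) * s" using lin_pair[OF lin, of "(s,0)"] by simp
  qed
  ultimately have "((\<lambda>t. f (t,b)) has_field_derivative f' (1,0)) (at a)"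
    by (simp add: has_field_derivative_def)
  then show "partial False f p = f' (1,0)" unfolding partial_def p
    by (simp add: DERIV_imp_deriv)
  have d2: "((\<lambda>t. (a,t)) has_derivative (\<lambda>s. (0,s))) (at b)"
    by (auto intro!: derivative_eq_intros)
  have "((\<lambda>t. f (a,t)) has_derivative (\<lambda>s. f' (0,s))) (at b)"
    using has_derivative_compose[OF d2, of f f'] assms p by (simp add: o_def)
  moreover have "(\<lambda>s. f' (0,s)) = (\<lambda>s. f' (0,1) * s)"
  proof
    fix s show "f' (0,s) = f' (0,1) * s" using lin_pair[OF lin, of "(0,s)"] by simp
  qed
  ultimately have "((\<lambda>t. f (a,t)) has_field_derivative f' (0,1)) (at b)"
    by (simp add: has_field_derivative_def)
  then show "partial True f p = f' (0,1)" unfolding partial_def p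
    by (simp add: DERIV_imp_deriv)
qed

lemma diff_rep:
  assumes "f differentiable (at p)"
  shows "(f has_derivative (\<lambda>v. fst v * partial False f p + snd v * partial True f p)) (at p)"
proof -
  obtain f' where f': "(f has_derivative f') (at p)" using assms differentiable_def by blast
  have lin: "linear f'" using f' has_derivative_linear by blast
  have "f' = (\<lambda>v. fst v * f' (1,0) + snd v * f' (0,1))"
  proof
    fix v show "f' v = fst v * f' (1,0) + snd v * f' (0,1)" by (rule lin_pair[OF lin])
  qed
  with f' partial_has[OF f'] show ?thesis by simp
qed

lemma partial_local:
  assumes "open S" "p \<in> S" "\<And>x. x \<in> S \<Longrightarrow> f x = g x"
  shows "partial d f p = partial d g p"
proof -
  obtain a b where p: "p = (a,b)" by (cases p)
  have o1: "open {t. (t,b) \<in> S}"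
    by (rule open_vimage[OF assms(1), of "\<lambda>t. (t,b)", simplified vimage_def]) (auto intro!: continuous_intros)
  have o2: "open {t. (a,t) \<in> S}"
    by (rule open_vimage[OF assms(1), of "\<lambda>t. (a,t)", simplified vimage_def]) (auto intro!: continuous_intros)
  have e1: "eventually (\<lambda>t. f (t,b) = g (t,b)) (nhds a)"
    unfolding eventually_nhds by (intro exI[of _ "{t. (t,b) \<in> S}"]) (use o1 assms p in auto)
  have e2: "eventually (\<lambda>t. f (a,t) = g (a,t)) (nhds b)"
    unfolding eventually_nhds by (intro exI[of _ "{t. (a,t) \<in> S}"]) (use o2 assms p in auto)
  show ?thesis unfolding partial_def p
    using deriv_cong_ev[OF e1 refl] deriv_cong_ev[OF e2 refl] by simp
qed

lemma iter_partial_Cons: "iter_partial (d # ds) f = partial d (iter_partial ds f)"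
  by (simp add: iter_partial_def)

lemma iter_partial_Nil: "iter_partial [] f = f"
  by (simp add: iter_partial_def)

lemma iter_partial_append: "iter_partial (xs @ ys) f = iter_partial xs (iter_partial ys f)"
  by (simp add: iter_partial_def)

lemma iter_partial_local:
  assumes "open S" "\<And>x. x \<in> S \<Longrightarrow> f x = g x" "p \<in> S"
  shows "iter_partial ds f p = iter_partial ds g p"
  using assms(3)
proof (induction ds arbitrary: p)
  case Nil then show ?case using assms by (simp add: iter_partial_Nil)
next
  case (Cons d ds)
  then show ?case unfolding iter_partial_Cons
    by (intro partial_local[OF assms(1)]) auto
qed

lemma partial_lin:
  assumes "f differentiable (at p)" "g differentiable (at p)"
  shows "partial d (\<lambda>x. a * f x + b * g x) p = a * partial d f p + b * partial d g p"
proof -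
  have "((\<lambda>x. a * f x + b * g x) has_derivative
     (\<lambda>v. a * (fst v * partial False f p + snd v * partial True f p) + b * (fst v * partial False g p + snd v * partial True g p))) (at p)"
    using diff_rep[OF assms(1)] diff_rep[OF assms(2)] by (auto intro!: derivative_eq_intros)
  from partial_has[OF this] show ?thesis by (cases d) auto
qed

lemma iter_partial_lin:
  assumes "open S" "smooth_on S f" "smooth_on S g" "p \<in> S"
  shows "iter_partial ds (\<lambda>x. a * f x + b * g x) p = a * iter_partial ds f p + b * iter_partial ds g p"
  using assms(4)
proof (induction ds arbitrary: p)
  case Nil then show ?case by (simp add: iter_partial_Nil)
next
  case (Cons d ds)
  have "iter_partial (d # ds) (\<lambda>x. a * f x + b * g x) p
      = partial d (\<lambda>x. a * iter_partial ds f x + b * iter_partial ds g x) p"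
    unfolding iter_partial_Cons using Cons by (intro partial_local[OF assms(1)]) auto
  also have "\<dots> = a * iter_partial (d # ds) f p + b * iter_partial (d # ds) g p"
    unfolding iter_partial_Cons
    using assms(2,3) Cons.prems unfolding smooth_on_def by (intro partial_lin) auto
  finally show ?case .
qed

lemma smooth_lin:
  assumes "open S" "smooth_on S f" "smooth_on S g"
  shows "smooth_on S (\<lambda>x. a * f x + b * g x)"
  unfolding smooth_on_def
proof (intro allI ballI)
  fix ds p assume p: "p \<in> S"
  have "(\<lambda>x. a * iter_partial ds f x + b * iter_partial ds g x) differentiable (at p)"
    using assms p unfolding smooth_on_def by (intro derivative_intros) auto
  then obtain D where D: "((\<lambda>x. a * iter_partial ds f x + b * iter_partial ds g x) has_derivative D) (at p)"
    using differentiable_def by blast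
  have "((iter_partial ds (\<lambda>x. a * f x + b * g x)) has_derivative D) (at p)"
    by (rule has_derivative_transform_within_open[OF D assms(1) p])
       (use iter_partial_lin[OF assms] in auto)
  then show "iter_partial ds (\<lambda>x. a * f x + b * g x) differentiable (at p)"
    using differentiable_def by blast
qed

lemma slice_deriv:
  assumes "(f has_derivative (\<lambda>v. fst v * P + snd v * Q)) (at (s,t))"
  shows "((\<lambda>x. f (x,t)) has_real_derivative P) (at s)"
    and "((\<lambda>y. f (s,y)) has_real_derivative Q) (at t)"
proof -
  have d1: "((\<lambda>x. (x,t)) has_derivative (\<lambda>r. (r,0))) (at s)"
    by (auto intro!: derivative_eq_intros)
  have "((\<lambda>x. f (x,t)) has_derivative (*) P) (at s)"
    by (rule has_derivative_eq_rhs[OF has_derivative_compose[OF d1 assms, unfolded o_def]]) (auto simp: fun_eq_iff)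
  then show "((\<lambda>x. f (x,t)) has_real_derivative P) (at s)"
    by (simp add: has_field_derivative_def)
  have d2: "((\<lambda>y. (s,y)) has_derivative (\<lambda>r. (0,r))) (at t)"
    by (auto intro!: derivative_eq_intros)
  have "((\<lambda>y. f (s,y)) has_derivative (*) Q) (at t)"
    by (rule has_derivative_eq_rhs[OF has_derivative_compose[OF d2 assms, unfolded o_def]]) (auto simp: fun_eq_iff)
  then show "((\<lambda>y. f (s,y)) has_real_derivative Q) (at t)"
    by (simp add: has_field_derivative_def)
qed

lemma half_schwarz:
  fixes g gx :: "real \<Rightarrow> real \<Rightarrow> real" and a b A C rr e :: real
  assumes der: "\<And>s t. \<bar>s-a\<bar> < rr \<Longrightarrow> \<bar>t-b\<bar> < rr \<Longrightarrow> ((\<lambda>x. g x t) has_real_derivative gx s t) (at s)"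
    and rr: "rr > 0"
    and dif: "\<forall>e>0. \<exists>d>0. \<forall>s t. \<bar>s-a\<bar> < d \<and> \<bar>t-b\<bar> < d \<longrightarrow>
                \<bar>gx s t - gx a b - C*(s-a) - A*(t-b)\<bar> \<le> e * (\<bar>s-a\<bar> + \<bar>t-b\<bar>)"
    and e: "e > 0"
  shows "\<exists>d>0. \<forall>h. 0<h \<and> h<d \<longrightarrow> \<bar>g (a+h) (b+h) - g (a+h) b - g a (b+h) + g a b - A*h^2\<bar> \<le> e * h^2"
proof -
  obtain d1 where d1: "d1 > 0" and H: "\<forall>s t. \<bar>s-a\<bar> < d1 \<and> \<bar>t-b\<bar> < d1 \<longrightarrow>
                \<bar>gx s t - gx a b - C*(s-a) - A*(t-b)\<bar> \<le> (e/3) * (\<bar>s-a\<bar> + \<bar>t-b\<bar>)"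
    using dif e by (meson divide_pos_pos zero_less_numeral)
  show ?thesis
  proof (intro exI[of _ "min rr d1"] conjI allI impI)
    show "min rr d1 > 0" using rr d1 by simp
    fix h assume h: "0 < h \<and> h < min rr d1"
    define \<phi> where "\<phi> x = g x (b+h) - g x b" for x
    have "\<And>x. a \<le> x \<Longrightarrow> x \<le> a+h \<Longrightarrow> DERIV \<phi> x :> gx x (b+h) - gx x b"
    proof -
      fix x assume x: "a \<le> x" "x \<le> a+h"
      have "\<bar>x-a\<bar> < rr" using x h by auto
      moreover have "\<bar>b+h-b\<bar> < rr" "\<bar>b-b\<bar> < rr" using h rr by auto
      ultimately show "DERIV \<phi> x :> gx x (b+h) - gx x b"
        unfolding \<phi>_def using der by (intro derivative_intros) auto
    qed
    then obtain z where z: "a < z" "z < a+h" "\<phi> (a+h) - \<phi> a = h * (gx z (b+h) - gx z b)"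
      using MVT2[of a "a+h" \<phi> "\<lambda>x. gx x (b+h) - gx x b"] h by auto
    have u1: "\<bar>gx z (b+h) - gx a b - C*(z-a) - A*h\<bar> \<le> (e/3) * (\<bar>z-a\<bar> + \<bar>h\<bar>)"
      using H[rule_format, of z "b+h"] z h by auto
    have u2: "\<bar>gx z b - gx a b - C*(z-a) - A*0\<bar> \<le> (e/3) * (\<bar>z-a\<bar> + \<bar>0\<bar>)"
      using H[rule_format, of z b] z h by auto
    have za: "\<bar>z-a\<bar> \<le> h" using z by auto
    have "\<bar>gx z (b+h) - gx z b - A*h\<bar> \<le> (e/3) * (\<bar>z-a\<bar> + \<bar>h\<bar>) + (e/3) * (\<bar>z-a\<bar> + \<bar>0\<bar>)"
    proof -
      have "gx z (b+h) - gx z b - A*h = (gx z (b+h) - gx a b - C*(z-a) - A*h) - (gx z b - gx a b - C*(z-a) - A*0)"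
        by simp
      then have "\<bar>gx z (b+h) - gx z b - A*h\<bar> \<le> \<bar>gx z (b+h) - gx a b - C*(z-a) - A*h\<bar> + \<bar>gx z b - gx a b - C*(z-a) - A*0\<bar>"
        by (metis abs_triangle_ineq4)
      then show ?thesis using u1 u2 by linarith
    qed
    also have "\<dots> \<le> (e/3) * (h + h) + (e/3) * (h + 0)"
      using za h e by (intro add_mono mult_left_mono) auto
    also have "\<dots> = e * h" by simp
    finally have k: "\<bar>gx z (b+h) - gx z b - A*h\<bar> \<le> e * h" .
    have "g (a+h) (b+h) - g (a+h) b - g a (b+h) + g a b - A*h^2 = h * (gx z (b+h) - gx z b - A*h)"
      using z(3) unfolding \<phi>_def by (simp add: algebra_simps power2_eq_square)
    then have "\<bar>g (a+h) (b+h) - g (a+h) b - g a (b+h) + g a b - A*h^2\<bar> = h * \<bar>gx z (b+h) - gx z b - A*h\<bar>"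
      using h by (simp add: abs_mult)
    also have "\<dots> \<le> h * (e * h)" using k h by (intro mult_left_mono) auto
    finally show "\<bar>g (a+h) (b+h) - g (a+h) b - g a (b+h) + g a b - A*h^2\<bar> \<le> e * h^2"
      by (simp add: power2_eq_square algebra_simps)
  qed
qed

lemma deriv_eps:
  assumes "F differentiable (at (a,b))"
  shows "\<forall>e>0. \<exists>d>0. \<forall>s t. \<bar>s-a\<bar> < d \<and> \<bar>t-b\<bar> < d \<longrightarrow>
     \<bar>F (s,t) - F (a,b) - partial False F (a,b) * (s-a) - partial True F (a,b) * (t-b)\<bar> \<le> e * (\<bar>s-a\<bar> + \<bar>t-b\<bar>)"
proof (intro allI impI)
  fix e :: real assume e: "e > 0"
  from diff_rep[OF assms] e obtain d where d: "d > 0" and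
    H: "\<forall>y. norm (y - (a,b)) < d \<longrightarrow> norm (F y - F (a,b) - (fst (y - (a,b)) * partial False F (a,b) + snd (y - (a,b)) * partial True F (a,b))) \<le> e * norm (y - (a,b))"
    unfolding has_derivative_at_alt by blast
  show "\<exists>d>0. \<forall>s t. \<bar>s-a\<bar> < d \<and> \<bar>t-b\<bar> < d \<longrightarrow>
     \<bar>F (s,t) - F (a,b) - partial False F (a,b) * (s-a) - partial True F (a,b) * (t-b)\<bar> \<le> e * (\<bar>s-a\<bar> + \<bar>t-b\<bar>)"
  proof (intro exI[of _ "d/2"] conjI allI impI)
    show "d/2 > 0" using d by simp
    fix s t assume st: "\<bar>s-a\<bar> < d/2 \<and> \<bar>t-b\<bar> < d/2"
    have n: "norm ((s,t) - (a,b)) \<le> \<bar>s-a\<bar> + \<bar>t-b\<bar>"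
      using norm_Pair_le[of "s-a" "t-b"] by simp
    then have "norm ((s,t) - (a,b)) < d" using st by linarith
    then have "norm (F (s,t) - F (a,b) - ((s-a) * partial False F (a,b) + (t-b) * partial True F (a,b))) \<le> e * norm ((s,t) - (a,b))"
      using H by auto
    also have "\<dots> \<le> e * (\<bar>s-a\<bar> + \<bar>t-b\<bar>)" using n e by (intro mult_left_mono) auto
    finally show "\<bar>F (s,t) - F (a,b) - partial False F (a,b) * (s-a) - partial True F (a,b) * (t-b)\<bar> \<le> e * (\<bar>s-a\<bar> + \<bar>t-b\<bar>)"
      by (simp add: algebra_simps)
  qed
qed

lemma schwarz:
  assumes S: "open S" and p: "p \<in> S"
    and df: "\<And>q. q \<in> S \<Longrightarrow> f differentiable (at q)"
    and dfx: "partial False f differentiable (at p)"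
    and dfy: "partial True f differentiable (at p)"
  shows "partial True (partial False f) p = partial False (partial True f) p"
proof -
  obtain a b where pab: "p = (a,b)" by (cases p)
  obtain r where r: "r > 0" "ball p r \<subseteq> S" using S p open_contains_ball by blast
  define d0 where "d0 = r/2"
  have d0: "d0 > 0" using r d0_def by simp
  have inS: "(s,t) \<in> S" if "\<bar>s-a\<bar> < d0" "\<bar>t-b\<bar> < d0" for s t
  proof -
    have "dist (a,b) (s,t) = norm ((s,t) - (a,b))" by (metis dist_commute dist_norm)
    also have "\<dots> \<le> \<bar>s-a\<bar> + \<bar>t-b\<bar>" using norm_Pair_le[of "s-a" "t-b"] by simp
    also have "\<dots> < r" using that d0_def by simp
    finally show ?thesis using r pab by auto
  qed
  define A where "A = partial True (partial False f) p"
  define B where "B = partial False (partial True f) p"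
  define \<Delta> where "\<Delta> h = f (a+h,b+h) - f (a+h,b) - f (a,b+h) + f (a,b)" for h
  have H1: "\<exists>d>0. \<forall>h. 0<h \<and> h<d \<longrightarrow> \<bar>\<Delta> h - A*h^2\<bar> \<le> e * h^2" if e: "e > 0" for e
  proof -
    have "\<exists>d>0. \<forall>h. 0<h \<and> h<d \<longrightarrow> \<bar>(\<lambda>x y. f (x,y)) (a+h) (b+h) - (\<lambda>x y. f (x,y)) (a+h) b
         - (\<lambda>x y. f (x,y)) a (b+h) + (\<lambda>x y. f (x,y)) a b - A*h^2\<bar> \<le> e * h^2"
    proof (rule half_schwarz[where gx = "\<lambda>s t. partial False f (s,t)" and rr = d0 and C = "partial False (partial False f) p"])
      fix s t assume "\<bar>s-a\<bar> < d0" "\<bar>t-b\<bar> < d0"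
      then have "(s,t) \<in> S" by (rule inS)
      from slice_deriv(1)[OF diff_rep[OF df[OF this]]]
      show "((\<lambda>x. (\<lambda>x y. f (x,y)) x t) has_real_derivative partial False f (s,t)) (at s)" by simp
    next
      show "d0 > 0" by (rule d0)
    next
      show "e > 0" by (rule e)
    next
      show "\<forall>e>0. \<exists>d>0. \<forall>s t. \<bar>s-a\<bar> < d \<and> \<bar>t-b\<bar> < d \<longrightarrow>
        \<bar>partial False f (s,t) - partial False f (a,b) - partial False (partial False f) p*(s-a) - A*(t-b)\<bar> \<le> e * (\<bar>s-a\<bar> + \<bar>t-b\<bar>)"
        using deriv_eps[of "partial False f" a b] dfx unfolding A_def pab by simp
    qed
    then show ?thesis unfolding \<Delta>_def by simp
  qed
  have H2: "\<exists>d>0. \<forall>h. 0<h \<and> h<d \<longrightarrow> \<bar>\<Delta> h - B*h^2\<bar> \<le> e * h^2" if e: "e > 0" for e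
  proof -
    have "\<exists>d>0. \<forall>h. 0<h \<and> h<d \<longrightarrow> \<bar>(\<lambda>y x. f (x,y)) (b+h) (a+h) - (\<lambda>y x. f (x,y)) (b+h) a
         - (\<lambda>y x. f (x,y)) b (a+h) + (\<lambda>y x. f (x,y)) b a - B*h^2\<bar> \<le> e * h^2"
    proof (rule half_schwarz[where gx = "\<lambda>t s. partial True f (s,t)" and rr = d0 and C = "partial True (partial True f) p"])
      fix t s assume "\<bar>t-b\<bar> < d0" "\<bar>s-a\<bar> < d0"
      then have "(s,t) \<in> S" by (intro inS)
      from slice_deriv(2)[OF diff_rep[OF df[OF this]]]
      show "((\<lambda>y. (\<lambda>y x. f (x,y)) y s) has_real_derivative partial True f (s,t)) (at t)" by simp
    next
      show "d0 > 0" by (rule d0)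
    next
      show "e > 0" by (rule e)
    next
      have *: "\<forall>e>0. \<exists>d>0. \<forall>s t. \<bar>s-a\<bar> < d \<and> \<bar>t-b\<bar> < d \<longrightarrow>
        \<bar>partial True f (s,t) - partial True f (a,b) - B*(s-a) - partial True (partial True f) p*(t-b)\<bar> \<le> e * (\<bar>s-a\<bar> + \<bar>t-b\<bar>)"
        using deriv_eps[of "partial True f" a b] dfy unfolding B_def pab by simp
      show "\<forall>e>0. \<exists>d>0. \<forall>t s. \<bar>t-b\<bar> < d \<and> \<bar>s-a\<bar> < d \<longrightarrow>
        \<bar>partial True f (s,t) - partial True f (a,b) - partial True (partial True f) p*(t-b) - B*(s-a)\<bar> \<le> e * (\<bar>t-b\<bar> + \<bar>s-a\<bar>)"
      proof (intro allI impI)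
        fix e :: real assume "e > 0"
        with * obtain d where "d > 0" "\<forall>s t. \<bar>s-a\<bar> < d \<and> \<bar>t-b\<bar> < d \<longrightarrow>
          \<bar>partial True f (s,t) - partial True f (a,b) - B*(s-a) - partial True (partial True f) p*(t-b)\<bar> \<le> e * (\<bar>s-a\<bar> + \<bar>t-b\<bar>)"
          by blast
        then show "\<exists>d>0. \<forall>t s. \<bar>t-b\<bar> < d \<and> \<bar>s-a\<bar> < d \<longrightarrow>
        \<bar>partial True f (s,t) - partial True f (a,b) - partial True (partial True f) p*(t-b) - B*(s-a)\<bar> \<le> e * (\<bar>t-b\<bar> + \<bar>s-a\<bar>)"
        proof (intro exI[of _ d] conjI allI impI)
          show "d > 0" by fact
          fix t s assume "\<bar>t-b\<bar> < d \<and> \<bar>s-a\<bar> < d"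
          with \<open>\<forall>s t. _\<close> have X: "\<bar>partial True f (s,t) - partial True f (a,b) - B*(s-a) - partial True (partial True f) p*(t-b)\<bar> \<le> e * (\<bar>s-a\<bar> + \<bar>t-b\<bar>)"
            by blast
          then show "\<bar>partial True f (s,t) - partial True f (a,b) - partial True (partial True f) p*(t-b) - B*(s-a)\<bar> \<le> e * (\<bar>t-b\<bar> + \<bar>s-a\<bar>)"
            by (simp add: algebra_simps)
        qed
      qed
    qed
    then show ?thesis unfolding \<Delta>_def by (simp add: algebra_simps)
  qed
  show ?thesis
  proof (rule ccontr)
    assume ne: "\<not> ?thesis"
    define e where "e = \<bar>A - B\<bar> / 4"
    have e: "e > 0" using ne unfolding e_def A_def B_def by simp
    obtain d1 where d1: "d1 > 0" "\<forall>h. 0<h \<and> h<d1 \<longrightarrow> \<bar>\<Delta> h - A*h^2\<bar> \<le> e * h^2" using H1[OF e] by blast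
    obtain d2 where d2: "d2 > 0" "\<forall>h. 0<h \<and> h<d2 \<longrightarrow> \<bar>\<Delta> h - B*h^2\<bar> \<le> e * h^2" using H2[OF e] by blast
    define h where "h = min d1 d2 / 2"
    have h: "0 < h" "h < d1" "h < d2" using d1 d2 h_def by auto
    have a1: "\<bar>\<Delta> h - A*h^2\<bar> \<le> e * h^2" using d1 h by auto
    have a2: "\<bar>\<Delta> h - B*h^2\<bar> \<le> e * h^2" using d2 h by auto
    have "\<bar>A - B\<bar> * h^2 = \<bar>(A - B) * h^2\<bar>" by (simp add: abs_mult)
    also have "\<dots> = \<bar>(\<Delta> h - B*h^2) - (\<Delta> h - A*h^2)\<bar>" by (simp add: algebra_simps)
    also have "\<dots> \<le> \<bar>\<Delta> h - B*h^2\<bar> + \<bar>\<Delta> h - A*h^2\<bar>" by (rule abs_triangle_ineq4)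
    also have "\<dots> \<le> 2 * e * h^2" using a1 a2 by linarith
    finally have "\<bar>A - B\<bar> * h^2 \<le> (\<bar>A - B\<bar> / 2) * h^2" unfolding e_def by simp
    moreover have "h^2 > 0" using h by simp
    ultimately have "\<bar>A - B\<bar> \<le> \<bar>A - B\<bar> / 2" by (meson mult_right_le_imp_le)
    then show False using e e_def by simp
  qed
qed

definition cT :: "bool list \<Rightarrow> nat" where "cT ds = length (filter (\<lambda>x. x) ds)"
definition cF :: "bool list \<Rightarrow> nat" where "cF ds = length (filter (\<lambda>x. \<not> x) ds)"

lemma cT_simps[simp]: "cT [] = 0" "cT (True # ds) = Suc (cT ds)" "cT (False # ds) = cT ds"
  "cT (ds @ [True]) = Suc (cT ds)" "cT (ds @ [False]) = cT ds"
  "cT (replicate j True @ replicate i False) = j"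
  by (auto simp: cT_def)

lemma cF_simps[simp]: "cF [] = 0" "cF (True # ds) = cF ds" "cF (False # ds) = Suc (cF ds)"
  "cF (replicate j True @ replicate i False) = i"
  by (auto simp: cF_def filter_replicate)

lemma cT_cF: "cT ds + cF ds = length ds"
  unfolding cT_def cF_def by (rule sum_length_filter_compl)

lemma smooth_ip: "smooth_on S f \<Longrightarrow> p \<in> S \<Longrightarrow> iter_partial ds f differentiable (at p)"
  unfolding smooth_on_def by blast

lemma swapF:
  assumes S: "open S" and sm: "smooth_on S f"
  shows "p \<in> S \<Longrightarrow> partial False (iter_partial (replicate j True @ ys) f) p
           = iter_partial (replicate j True @ False # ys) f p"
proof (induction j arbitrary: p)
  case 0 then show ?case by (simp add: iter_partial_Cons)
next
  case (Suc j)
  define G where "G = iter_partial (replicate j True @ ys) f"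
  have "partial False (iter_partial (replicate (Suc j) True @ ys) f) p = partial False (partial True G) p"
    by (simp add: G_def iter_partial_Cons)
  also have "\<dots> = partial True (partial False G) p"
  proof (rule schwarz[symmetric, OF S Suc.prems])
    fix q assume "q \<in> S" then show "G differentiable (at q)" unfolding G_def by (rule smooth_ip[OF sm])
  next
    show "partial False G differentiable (at p)"
      using smooth_ip[OF sm Suc.prems, of "False # replicate j True @ ys"] by (simp add: G_def iter_partial_Cons)
  next
    show "partial True G differentiable (at p)"
      using smooth_ip[OF sm Suc.prems, of "True # replicate j True @ ys"] by (simp add: G_def iter_partial_Cons)
  qed
  also have "\<dots> = partial True (iter_partial (replicate j True @ False # ys) f) p"
    by (rule partial_local[OF S Suc.prems]) (use Suc.IH in \<open>simp add: G_def\<close>)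
  also have "\<dots> = iter_partial (replicate (Suc j) True @ False # ys) f p"
    by (simp add: iter_partial_Cons)
  finally show ?case .
qed

lemma canon:
  assumes S: "open S" and sm: "smooth_on S f"
  shows "p \<in> S \<Longrightarrow> iter_partial ds f p = iter_partial (replicate (cT ds) True @ replicate (cF ds) False) f p"
proof (induction ds arbitrary: p)
  case Nil then show ?case by simp
next
  case (Cons d ds)
  have "iter_partial (d # ds) f p = partial d (iter_partial (replicate (cT ds) True @ replicate (cF ds) False) f) p"
    unfolding iter_partial_Cons by (rule partial_local[OF S Cons.prems]) (use Cons.IH in simp)
  also have "\<dots> = iter_partial (replicate (cT (d # ds)) True @ replicate (cF (d # ds)) False) f p"
  proof (cases d)
    case True then show ?thesis by (simp add: iter_partial_Cons)
  next
    case False then show ?thesis using swapF[OF S sm Cons.prems, of "cT ds" "replicate (cF ds) False"] by simp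
  qed
  finally show ?case .
qed

fun Gs :: "real \<Rightarrow> real \<Rightarrow> nat \<Rightarrow> (bool list \<Rightarrow> real) \<Rightarrow> real" where
  "Gs c s 0 g = g []"
| "Gs c s (Suc m) g = Gs c s m (\<lambda>ds. c * g (False # ds) + s * g (True # ds))"

lemma Gs_cong: "(\<And>ds. length ds = m \<Longrightarrow> g ds = g' ds) \<Longrightarrow> Gs c s m g = Gs c s m g'"
proof (induction m arbitrary: g g')
  case 0 then show ?case by simp
next
  case (Suc m) show ?case by simp (rule Suc.IH, use Suc.prems in simp)
qed

lemma Gs_deriv:
  "(\<And>ds. length ds = m \<Longrightarrow> ((\<lambda>t. g ds t) has_real_derivative g' ds) (at t0)) \<Longrightarrow>
   ((\<lambda>t. Gs c s m (\<lambda>ds. g ds t)) has_real_derivative Gs c s m g') (at t0)"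
proof (induction m arbitrary: g g')
  case 0 then show ?case by simp
next
  case (Suc m)
  have "((\<lambda>t. Gs c s m (\<lambda>ds. c * g (False # ds) t + s * g (True # ds) t)) has_real_derivative
          Gs c s m (\<lambda>ds. c * g' (False # ds) + s * g' (True # ds))) (at t0)"
  proof (rule Suc.IH)
    fix ds :: "bool list" assume l: "length ds = m"
    have 1: "(g (False#ds) has_real_derivative g' (False#ds)) (at t0)" using Suc.prems l by simp
    have 2: "(g (True#ds) has_real_derivative g' (True#ds)) (at t0)" using Suc.prems l by simp
    show "((\<lambda>t. c * g (False # ds) t + s * g (True # ds) t) has_real_derivative c * g' (False # ds) + s * g' (True # ds)) (at t0)"
      by (intro DERIV_add DERIV_cmult 1 2)
  qed
  then show ?case by simp
qed

lemma Gs_complex: "Gs c s m (\<lambda>ds. Re (z * \<i> ^ cT ds)) = Re (z * Complex c s ^ m)"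
proof (induction m arbitrary: z)
  case 0 then show ?case by simp
next
  case (Suc m)
  have "Gs c s (Suc m) (\<lambda>ds. Re (z * \<i> ^ cT ds)) = Gs c s m (\<lambda>ds. Re ((z * Complex c s) * \<i> ^ cT ds))"
    by (simp, rule Gs_cong) (simp add: algebra_simps)
  also have "\<dots> = Re ((z * Complex c s) * Complex c s ^ m)" by (rule Suc.IH)
  also have "\<dots> = Re (z * Complex c s ^ Suc m)" by (simp add: mult.assoc)
  finally show ?case .
qed

lemma ip_line_deriv:
  assumes sm: "smooth_on S f" and q: "x0 + t0 *\<^sub>R (c,s) \<in> S"
  shows "((\<lambda>t. iter_partial ds f (x0 + t *\<^sub>R (c,s))) has_real_derivative
           c * iter_partial (False # ds) f (x0 + t0 *\<^sub>R (c,s)) + s * iter_partial (True # ds) f (x0 + t0 *\<^sub>R (c,s))) (at t0)"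
proof -
  let ?q = "x0 + t0 *\<^sub>R (c,s)"
  have dL: "((\<lambda>t. x0 + t *\<^sub>R (c,s)) has_derivative (\<lambda>r. r *\<^sub>R (c,s))) (at t0)"
    by (auto intro!: derivative_eq_intros)
  have dF: "(iter_partial ds f has_derivative (\<lambda>v. fst v * partial False (iter_partial ds f) ?q + snd v * partial True (iter_partial ds f) ?q)) (at ?q)"
    by (rule diff_rep[OF smooth_ip[OF sm q]])
  have "((\<lambda>t. iter_partial ds f (x0 + t *\<^sub>R (c,s))) has_derivative
      (*) (c * iter_partial (False # ds) f ?q + s * iter_partial (True # ds) f ?q)) (at t0)"
    by (rule has_derivative_eq_rhs[OF has_derivative_compose[OF dL dF, unfolded o_def]])
       (auto simp: fun_eq_iff iter_partial_Cons algebra_simps)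
  then show ?thesis by (simp add: has_field_derivative_def)
qed

lemma line_zero:
  assumes S: "open S" and sm: "smooth_on S f" and h: "h > 0"
    and seg: "segment_from x0 (c,s) h \<subseteq> S"
    and z: "\<forall>p\<in>segment_from x0 (c,s) h. f p = 0"
  shows "Gs c s k (\<lambda>ds. iter_partial ds f x0) = 0"
proof -
  define L where "L t = x0 + t *\<^sub>R (c,s)" for t
  define F where "F m t = Gs c s m (\<lambda>ds. iter_partial ds f (L t))" for m t
  have Lseg: "L t \<in> segment_from x0 (c,s) h" if "0 \<le> t" "t \<le> h" for t
    using that unfolding L_def segment_from_def by blast
  have dF: "(F m has_real_derivative F (Suc m) t) (at t)" if "0 \<le> t" "t \<le> h" for m t
  proof -
    have "L t \<in> S" using Lseg[OF that] seg by blast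
    then have "((\<lambda>t. Gs c s m (\<lambda>ds. iter_partial ds f (L t))) has_real_derivative
       Gs c s m (\<lambda>ds. c * iter_partial (False # ds) f (L t) + s * iter_partial (True # ds) f (L t))) (at t)"
      unfolding L_def by (intro Gs_deriv ip_line_deriv[OF sm])
    then show ?thesis unfolding F_def by simp
  qed
  have zero: "\<forall>t. 0 < t \<and> t < h \<longrightarrow> F m t = 0" for m
  proof (induction m)
    case 0 show ?case using z Lseg by (auto simp: F_def iter_partial_Nil)
  next
    case (Suc m)
    show ?case
    proof (intro allI impI)
      fix t assume t: "0 < t \<and> t < h"
      have ev: "eventually (\<lambda>x. F m x = (\<lambda>_. 0) x) (nhds t)"
        unfolding eventually_nhds
        by (intro exI[of _ "{0<..<h}"]) (use t Suc.IH in auto)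
      have "((\<lambda>_. 0) has_real_derivative F (Suc m) t) (at t)"
        using dF[of t m] t DERIV_cong_ev[OF refl ev refl] by auto
      then show "F (Suc m) t = 0" using DERIV_const DERIV_unique by blast
    qed
  qed
  have "isCont (F k) 0" using dF[of 0 k] h DERIV_isCont by auto
  then have l1: "(F k \<longlongrightarrow> F k 0) (at_right 0)"
    by (simp add: isCont_def filterlim_at_split)
  have "eventually (\<lambda>t. F k t = 0) (at_right 0)"
    unfolding eventually_at_right_field using h zero by (intro exI[of _ h]) auto
  then have l2: "(F k \<longlongrightarrow> 0) (at_right 0)" by (rule tendsto_eventually)
  have "F k 0 = 0" using tendsto_unique[OF _ l1 l2] by simp
  moreover have "L 0 = x0" unfolding L_def by (metis add.right_neutral scaleR_zero_left)
  ultimately show ?thesis by (simp add: F_def)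
qed

lemma Ccis: "Complex (cos t) (sin t) = cis t"
  by (simp add: complex_eq_iff)

lemma smooth_ip_on: "smooth_on S f \<Longrightarrow> smooth_on S (iter_partial ds f)"
  unfolding smooth_on_def by (simp add: iter_partial_append[symmetric])

lemma lap_rel:
  assumes S: "open S" and sm: "smooth_on S u" and lap: "\<forall>p\<in>S. - laplacian u p = lam * u p"
    and p: "p \<in> S"
  shows "iter_partial (ds @ [False, False]) u p + iter_partial (ds @ [True, True]) u p = - lam * iter_partial ds u p"
proof -
  define v1 where "v1 = iter_partial [False, False] u"
  define v2 where "v2 = iter_partial [True, True] u"
  have s1: "smooth_on S v1" "smooth_on S v2" unfolding v1_def v2_def by (rule smooth_ip_on[OF sm])+
  have eq: "(\<lambda>x. 1 * v1 x + 1 * v2 x) x = (\<lambda>x. (- lam) * u x + 0 * u x) x" if "x \<in> S" for x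
    using lap that unfolding v1_def v2_def laplacian_def by (auto simp: iter_partial_def)
  have "iter_partial ds (\<lambda>x. 1 * v1 x + 1 * v2 x) p = iter_partial ds (\<lambda>x. (- lam) * u x + 0 * u x) p"
    by (rule iter_partial_local[OF S eq p]) 
  then have "1 * iter_partial ds v1 p + 1 * iter_partial ds v2 p = (- lam) * iter_partial ds u p + 0 * iter_partial ds u p"
    using iter_partial_lin[OF S s1 p] iter_partial_lin[OF S sm sm p] by metis
  then show ?thesis unfolding v1_def v2_def by (simp add: iter_partial_append)
qed

theorem theorem3p7:
  fixes \<Omega> :: "(real \<times> real) set" and u :: "real \<times> real \<Rightarrow> real"
    and lam h \<alpha> \<theta> :: real and x0 :: "real \<times> real" and n :: nat
  assumes "open \<Omega>"
    and "lam > 0"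
    and "set_integrable lborel \<Omega> (\<lambda>x. (u x)\<^sup>2)"
    and "real_analytic_on \<Omega> u"
    and "smooth_on \<Omega> u"
    and "\<forall>p\<in>\<Omega>. - laplacian u p = lam * u p"
    and "x0 \<in> \<Omega>" and "h > 0" and "0 < \<alpha>" and "\<alpha> < 1"
    and "segment_from x0 (dir (\<theta> + \<alpha> * pi)) h \<subseteq> \<Omega>"
    and "segment_from x0 (dir \<theta>) h \<subseteq> \<Omega>"
    and "\<forall>p\<in>segment_from x0 (dir (\<theta> + \<alpha> * pi)) h.
           normal_deriv u (dir (\<theta> + \<alpha> * pi + pi / 2)) p = 0"
    and "\<forall>p\<in>segment_from x0 (dir \<theta>) h. u p = 0"
    and "n \<ge> 2"
    and "\<forall>p q :: int. 1 \<le> p \<and> p \<le> int n - 1 \<and> 0 \<le> q \<and> q \<le> p - 1 \<longrightarrow>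
           \<alpha> \<noteq> (2 * of_int q + 1) / (2 * of_int p)"
  shows "\<forall>ds. length ds \<le> n - 1 \<longrightarrow> iter_partial ds u x0 = 0"
proof -
  note S = assms(1) and sm = assms(5) and lap = assms(6) and x0 = assms(7) and h = assms(8)
  note seg2 = assms(11) and seg1 = assms(12) and sing = assms(13) and nod = assms(14)
  define \<phi> where "\<phi> = \<theta> + \<alpha> * pi"
  define w where "w = (\<lambda>x. (- sin \<phi>) * iter_partial [False] u x + cos \<phi> * iter_partial [True] u x)"
  have smw: "smooth_on \<Omega> w" unfolding w_def by (intro smooth_lin S smooth_ip_on sm)
  have wseg: "\<forall>p\<in>segment_from x0 (cos \<phi>, sin \<phi>) h. w p = 0"
    using sing unfolding w_def \<phi>_def normal_deriv_def dir_def
    by (auto simp: iter_partial_def cos_add sin_add)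
  have wip: "iter_partial ds w x0 = (- sin \<phi>) * iter_partial (ds @ [False]) u x0 + cos \<phi> * iter_partial (ds @ [True]) u x0" for ds
  proof -
    have "iter_partial ds w x0 = (- sin \<phi>) * iter_partial ds (iter_partial [False] u) x0 + cos \<phi> * iter_partial ds (iter_partial [True] u) x0"
      unfolding w_def by (rule iter_partial_lin[OF S smooth_ip_on[OF sm] smooth_ip_on[OF sm] x0])
    then show ?thesis by (simp add: iter_partial_append)
  qed
  have main: "\<forall>ds. length ds = k \<longrightarrow> iter_partial ds u x0 = 0" if "k < n" for k
    using that
  proof (induction k rule: less_induct)
    case (less k)
    show ?case
    proof (cases "k = 0")
      case True
      have "Gs (cos \<theta>) (sin \<theta>) 0 (\<lambda>ds. iter_partial ds u x0) = 0"
        by (rule line_zero[OF S sm h]) (use seg1 nod in \<open>auto simp: dir_def\<close>)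
      then show ?thesis using True by simp
    next
      case False
      then have k1: "k \<ge> 1" by simp
      define a where "a j = iter_partial (replicate j True @ replicate (k - j) False) u x0" for j
      have ca: "iter_partial ds u x0 = a (cT ds)" if "length ds = k" for ds
      proof -
        have "cF ds = k - cT ds" using cT_cF[of ds] that by simp
        then show ?thesis unfolding a_def using canon[OF S sm x0, of ds] by simp
      qed
      have rec: "a (j + 2) = - a j" if "j + 2 \<le> k" for j
      proof -
        define ds0 where "ds0 = replicate j True @ replicate (k - 2 - j) False"
        have l0: "length ds0 = k - 2" using that by (simp add: ds0_def)
        have "iter_partial ds0 u x0 = 0" using less.IH[of "k - 2"] less.prems l0 k1 by auto
        then have "iter_partial (ds0 @ [False, False]) u x0 + iter_partial (ds0 @ [True, True]) u x0 = 0"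
          using lap_rel[OF S sm lap x0, of ds0] by simp
        moreover have "iter_partial (ds0 @ [False, False]) u x0 = a j"
          using ca[of "ds0 @ [False, False]"] l0 that by (simp add: ds0_def cT_def)
        moreover have "iter_partial (ds0 @ [True, True]) u x0 = a (j + 2)"
          using ca[of "ds0 @ [True, True]"] l0 that by (simp add: ds0_def cT_def)
        ultimately show ?thesis by simp
      qed
      define \<zeta> where "\<zeta> = Complex (a 0) (- a 1)"
      have az: "a j = Re (\<zeta> * \<i> ^ j)" if "j \<le> k" for j
        using that
      proof (induction j rule: less_induct)
        case (less j)
        show ?case
        proof (cases "j \<ge> 2")
          case True
          then obtain i where i: "j = i + 2" by (metis add.commute le_Suc_ex)
          have "a j = - a i" using rec[of i] i less.prems by simp
          also have "\<dots> = - Re (\<zeta> * \<i> ^ i)" using less.IH[of i] i less.prems by simp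
          also have "\<dots> = Re (\<zeta> * \<i> ^ j)" by (simp add: i power_add)
          finally show ?thesis .
        next
          case False
          then have "j = 0 \<or> j = 1" by auto
          then show ?thesis by (auto simp: \<zeta>_def)
        qed
      qed
      have cu: "iter_partial ds u x0 = Re (\<zeta> * \<i> ^ cT ds)" if "length ds = k" for ds
      proof -
        have "cT ds \<le> k" using cT_cF[of ds] that by simp
        then show ?thesis using ca[OF that] az by simp
      qed
      have nodal: "Re (\<zeta> * cis (real k * \<theta>)) = 0"
      proof -
        have "Gs (cos \<theta>) (sin \<theta>) k (\<lambda>ds. iter_partial ds u x0) = 0"
          by (rule line_zero[OF S sm h]) (use seg1 nod in \<open>auto simp: dir_def\<close>)
        also have "Gs (cos \<theta>) (sin \<theta>) k (\<lambda>ds. iter_partial ds u x0) = Gs (cos \<theta>) (sin \<theta>) k (\<lambda>ds. Re (\<zeta> * \<i> ^ cT ds))"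
          by (rule Gs_cong) (rule cu)
        also have "\<dots> = Re (\<zeta> * Complex (cos \<theta>) (sin \<theta>) ^ k)" by (rule Gs_complex)
        finally show ?thesis by (simp add: Ccis Complex.DeMoivre)
      qed
      have singular: "Im (\<zeta> * cis (real k * \<phi>)) = 0"
      proof -
        have "Gs (cos \<phi>) (sin \<phi>) (k - 1) (\<lambda>ds. iter_partial ds w x0) = 0"
          by (rule line_zero[OF S smw h]) (use seg2 wseg in \<open>auto simp: dir_def \<phi>_def\<close>)
        also have "Gs (cos \<phi>) (sin \<phi>) (k - 1) (\<lambda>ds. iter_partial ds w x0)
            = Gs (cos \<phi>) (sin \<phi>) (k - 1) (\<lambda>ds. Re ((\<zeta> * \<i> * cis \<phi>) * \<i> ^ cT ds))"
        proof (rule Gs_cong)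
          fix ds :: "bool list" assume l: "length ds = k - 1"
          have "iter_partial ds w x0 = (- sin \<phi>) * Re (\<zeta> * \<i> ^ cT ds) + cos \<phi> * Re (\<zeta> * \<i> ^ Suc (cT ds))"
            using wip[of ds] cu[of "ds @ [False]"] cu[of "ds @ [True]"] l k1 by simp
          also have "\<dots> = Re ((\<zeta> * \<i> * cis \<phi>) * \<i> ^ cT ds)"
            by (simp add: cis.code algebra_simps)
          finally show "iter_partial ds w x0 = Re ((\<zeta> * \<i> * cis \<phi>) * \<i> ^ cT ds)" .
        qed
        also have "\<dots> = Re ((\<zeta> * \<i> * cis \<phi>) * Complex (cos \<phi>) (sin \<phi>) ^ (k - 1))" by (rule Gs_complex)
        also have "\<dots> = Re (\<zeta> * \<i> * cis \<phi> ^ k)"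
          using k1 by (simp add: Ccis mult.assoc power_eq_if)
        also have "\<dots> = - Im (\<zeta> * cis (real k * \<phi>))" by (simp add: Complex.DeMoivre)
        finally show ?thesis by simp
      qed
      have "\<zeta> = 0"
      proof (rule ccontr)
        assume nz: "\<zeta> \<noteq> 0"
        define z1 where "z1 = \<zeta> * cis (real k * \<theta>)"
        have z1: "z1 = \<i> * complex_of_real (Im z1)" using nodal unfolding z1_def by (simp add: complex_eq_iff)
        have z1nz: "Im z1 \<noteq> 0" using nz z1 unfolding z1_def by (metis mult_eq_0_iff of_real_0 cis_neq_zero)
        have "\<zeta> * cis (real k * \<phi>) = z1 * cis (real k * \<alpha> * pi)"
          unfolding z1_def \<phi>_def by (simp add: cis_mult algebra_simps)
        also have "\<dots> = \<i> * complex_of_real (Im z1) * cis (real k * \<alpha> * pi)" using z1 by simp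
        finally have "Im (\<zeta> * cis (real k * \<phi>)) = Im z1 * cos (real k * \<alpha> * pi)"
          by (simp add: cis.code)
        with singular z1nz have "cos (real k * \<alpha> * pi) = 0" by simp
        then obtain i :: int where i: "odd i" "real k * \<alpha> * pi = of_int i * (pi / 2)"
          using cos_zero_iff_int by blast
        have ai: "\<alpha> = of_int i / (2 * real k)" using i(2) k1 by (simp add: field_simps)
        obtain q where q: "i = 2 * q + 1" using i(1) by (metis oddE)
        have "0 < of_int i / (2 * real k)" using ai assms(9) by simp
        then have "0 < i" using k1 by (simp add: zero_less_divide_iff)
        then have q0: "0 \<le> q" using q by simp
        have "of_int i / (2 * real k) < 1" using ai assms(10) by simp
        then have "of_int i < 2 * real k" using k1 by (simp add: divide_less_eq)
        then have "i < 2 * int k" by linarith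
        then have q1: "q \<le> int k - 1" using q by simp
        have "\<alpha> = (2 * of_int q + 1) / (2 * of_int (int k))" using ai q by simp
        moreover have "1 \<le> int k" "int k \<le> int n - 1" using k1 less.prems by auto
        ultimately show False using assms(16) q0 q1 by blast
      qed
      then show ?thesis using cu by simp
    qed
  qed
  show ?thesis
  proof (intro allI impI)
    fix ds :: "bool list" assume "length ds \<le> n - 1"
    then have "length ds < n" using assms(15) by simp
    then show "iter_partial ds u x0 = 0" using main by blast
  qed
qed

end
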